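(* Let $L:\mathbb{T}^d\times\mathbb{R}^d\to\mathbb{R}$ be continuous with $\lim_{|v|\to\infty}\inf_{x}L(x,v)/|v|=+\infty$. Let $(\varphi,\overline{H})$ be a subsolution to $H(x,-\nabla\varphi)=\overline{H}$, where $\varphi$ is Lipschitz continuous with constant $K$. Let $\eta\in C^\infty(\mathbb{R}^d)$ be a smoothing kernel (nonnegative, vanishing outside the unit ball $\mathbbm{B}_1$, with $\int\eta=1$), set $\eta_\delta(w)=\delta^{-d}\eta(w/\delta)$ and $\varphi^{(\delta)}(x)=\int_{\mathbb{R}^d}\varphi(x-w)\eta_\delta(w)\,dw$ for $\delta>0$. Then $(\varphi^{(\delta)},\overline{H}+\omega_{C_3}(\delta))$ is a subsolution to $H(x,-\nabla\varphi^{(\delta)})=\overline{H}+\omega_{C_3}(\delta)$.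
   Context: $\mathbb{T}^d=\mathbb{R}^d/\mathbb{Z}^d$; $x+v$ is the translate of $x\in\mathbb{T}^d$ by $v\in\mathbb{R}^d$; $\rho_{\mathbb{T}^d}(x,y)=\inf\{|v|:x+v=y\}$. $H(x,p)=\max_{v\in\mathbb{R}^d}[pv-L(x,v)]$. Hadamard superdifferential: $p\in\partial_D^+\phi(x)$ iff for all $w$, $\limsup_{h\downarrow0,w'\to w}\frac{\phi(x+hw')-\phi(x)}{h}\le pw$. A pair $(\phi,c)$, $\phi$ upper semicontinuous, $c\in\mathbb{R}$, is a subsolution to $H(x,-\nabla\phi)=c$ if $H(x,-p)\le c$ for all $x$ and $p\in\partial_D^+\phi(x)$. For $A\ge0$, $\omega_A(\delta)=\sup\{|L(x,v)-L(y,v)|: x,y\in\mathbb{T}^d,\ \rho_{\mathbb{T}^d}(x,y)\le\delta,\ |v|\le A\}$. The constant $C_3$: let $C_1'=\sup_{y\in\mathbb{T}^d}|L(y,0)|$, let $c\ge0$ be such that $L(x,v)\ge(K+C_1'+1)|v|$ whenever $|v|\ge c$, and $C_3=\max(c,1)$. *)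

theory Defs
  imports "HOL-Analysis.Analysis"
begin

text \<open>Points of the torus T^d are represented by points of R^d = real^'d;
  functions on T^d are represented by Z^d-periodic functions on R^d.\<close>

definition int_lattice :: "(real^'d) set" where
  "int_lattice = {z. \<forall>i. z $ i \<in> \<int>}"

definition periodic_fun :: "(real^'d \<Rightarrow> 'b) \<Rightarrow> bool" where
  "periodic_fun f \<longleftrightarrow> (\<forall>x z. z \<in> int_lattice \<longrightarrow> f (x + z) = f x)"

definition torus_dist :: "real^'d \<Rightarrow> real^'d \<Rightarrow> real" where
  "torus_dist x y = Inf {norm v | v. x + v - y \<in> int_lattice}"

definition upper_semicont :: "(real^'d \<Rightarrow> real) \<Rightarrow> bool" where
  "upper_semicont f \<longleftrightarrow> (\<forall>a. open {x. f x < a})"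

definition Ham :: "(real^'d \<Rightarrow> real^'d \<Rightarrow> real) \<Rightarrow> real^'d \<Rightarrow> real^'d \<Rightarrow> real" where
  "Ham L x p = (SUP v. p \<bullet> v - L x v)"

text \<open>Hadamard superdifferential, with the limsup written out.\<close>
definition hadamard_superdiff :: "(real^'d \<Rightarrow> real) \<Rightarrow> real^'d \<Rightarrow> (real^'d) set" where
  "hadamard_superdiff \<phi> x = {p. \<forall>w. \<forall>\<epsilon>>0. \<exists>r>0. \<forall>h w'. 0 < h \<and> h < r \<and> norm (w' - w) < r \<longrightarrow>
        (\<phi> (x + h *\<^sub>R w') - \<phi> x) / h \<le> p \<bullet> w + \<epsilon>}"

definition subsolution :: "(real^'d \<Rightarrow> real^'d \<Rightarrow> real) \<Rightarrow> (real^'d \<Rightarrow> real) \<Rightarrow> real \<Rightarrow> bool" where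
  "subsolution L \<phi> c \<longleftrightarrow> upper_semicont \<phi> \<and>
     (\<forall>x. \<forall>p \<in> hadamard_superdiff \<phi> x. Ham L x (- p) \<le> c)"

definition omega :: "(real^'d \<Rightarrow> real^'d \<Rightarrow> real) \<Rightarrow> real \<Rightarrow> real \<Rightarrow> real" where
  "omega L A \<delta> = Sup {\<bar>L x v - L y v\<bar> | x y v. torus_dist x y \<le> \<delta> \<and> norm v \<le> A}"

coinductive smooth_fun :: "(real^'d \<Rightarrow> real) \<Rightarrow> bool" where
  "(\<forall>x. f differentiable (at x)) \<Longrightarrow>
   (\<forall>i. smooth_fun (\<lambda>x. frechet_derivative f (at x) (axis i 1))) \<Longrightarrow> smooth_fun f"

definition mollify :: "(real^'d \<Rightarrow> real) \<Rightarrow> real \<Rightarrow> (real^'d \<Rightarrow> real) \<Rightarrow> real^'d \<Rightarrow> real" where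
  "mollify \<eta> \<delta> \<phi> x =
     integral UNIV (\<lambda>w. \<phi> (x - w) * (inverse (\<delta> ^ CARD('d)) * \<eta> (inverse \<delta> *\<^sub>R w)))"

end

theory Submission
  imports Defs
begin


lemma zero_lattice: "0 \<in> int_lattice"
  by (simp add: int_lattice_def)

lemma td_nonneg: "0 \<le> torus_dist x y"
  unfolding torus_dist_def
  by (rule cInf_greatest) (auto simp: int_lattice_def intro!: exI[of _ "y - x"])

lemma td_le: "torus_dist x y \<le> norm (y - x)"
  unfolding torus_dist_def
proof (rule cInf_lower)
  show "norm (y - x) \<in> {norm v |v. x + v - y \<in> int_lattice}"
    using zero_lattice by force
  show "bdd_below {norm v |v. x + v - y \<in> int_lattice}"
    by (rule bdd_belowI[of _ 0]) auto
qed

lemma td_half: "torus_dist (0::real^'d) (axis i (1/2)) \<ge> 1/2"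
  unfolding torus_dist_def
proof (rule cInf_greatest)
  show "{norm v |v. 0 + v - axis i (1/2) \<in> int_lattice} \<noteq> {}"
    by (auto simp: int_lattice_def intro!: exI[of _ "axis i (1/2)"])
next
  fix a assume "a \<in> {norm v |v. (0::real^'d) + v - axis i (1/2) \<in> int_lattice}"
  then obtain v where a: "a = norm v" and v: "v - axis i (1/2) \<in> int_lattice" by auto
  have "(v - axis i (1/2)) $ i \<in> \<int>" using v unfolding int_lattice_def by blast
  then have "v $ i - 1/2 \<in> \<int>" by (simp add: axis_def)
  then obtain n where n: "v $ i - 1/2 = of_int n" by (auto elim: Ints_cases)
  have "1/2 \<le> \<bar>v $ i\<bar>"
  proof (cases "n \<ge> 0")
    case True then have "(of_int n::real) \<ge> 0" by simp
    then show ?thesis using n by linarith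
  next
    case False then have "(of_int n::real) \<le> -1" by simp
    then show ?thesis using n by linarith
  qed
  also have "\<dots> \<le> norm v" by (rule component_le_norm_cart)
  finally show "1/2 \<le> a" using a by simp
qed

lemma frac_lattice: "\<exists>z\<in>int_lattice. (x::real^'d) - z \<in> cbox 0 (\<chi> i. 1)"
proof
  let ?z = "\<chi> i. real_of_int \<lfloor>x $ i\<rfloor>"
  show "?z \<in> int_lattice" by (simp add: int_lattice_def)
  show "x - ?z \<in> cbox 0 (\<chi> i. 1)"
    unfolding mem_box_cart
  proof (intro allI conjI)
    fix i
    have f: "real_of_int \<lfloor>x $ i\<rfloor> \<le> x $ i" "x $ i < real_of_int \<lfloor>x $ i\<rfloor> + 1"
      using floor_correct[of "x $ i"] by auto
    show "0 $ i \<le> (x - ?z) $ i" using f by simp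
    show "(x - ?z) $ i \<le> (\<chi> i. (1::real)) $ i" using f by (simp only: vector_minus_component vec_lambda_beta)
  qed
qed

lemma periodic_reduce:
  assumes "periodic_fun f"
  shows "\<exists>x0\<in>cbox 0 (\<chi> i. 1). f (x::real^'d) = f x0"
proof -
  obtain z where z: "z \<in> int_lattice" "x - z \<in> cbox 0 (\<chi> i. 1)" using frac_lattice by blast
  have "f ((x - z) + z) = f (x - z)" using assms z(1) unfolding periodic_fun_def by blast
  then show ?thesis using z(2) by (intro bexI[of _ "x - z"]) auto
qed

lemma L_bounded:
  fixes L :: "real^'d \<Rightarrow> real^'d \<Rightarrow> real"
  assumes cont: "continuous_on UNIV (\<lambda>(x, v). L x v)"
    and per: "\<forall>v. periodic_fun (\<lambda>x. L x v)"
  fixes A :: real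
  shows "\<exists>B. \<forall>x (v::real^'d). norm v \<le> A \<longrightarrow> \<bar>L x v\<bar> \<le> B"
proof -
  have "compact ((\<lambda>(x, v). L x v) ` (cbox 0 (\<chi> i. 1) \<times> cball 0 A))"
    by (intro compact_continuous_image continuous_on_subset[OF cont] compact_Times) auto
  then obtain B where B: "\<forall>y\<in>(\<lambda>(x, v). L x v) ` (cbox 0 (\<chi> i. 1) \<times> cball 0 A). norm y \<le> B"
    using compact_imp_bounded bounded_iff by metis
  show ?thesis
  proof (intro exI allI impI)
    fix x v :: "real^'d" assume v: "norm v \<le> A"
    obtain x0 where x0: "x0 \<in> cbox 0 (\<chi> i. 1)" "L x v = L x0 v"
      using periodic_reduce[OF per[rule_format, of v]] by blast
    show "\<bar>L x v\<bar> \<le> B" using B x0 v by force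
  qed
qed



lemma superdiff_quad:
  fixes \<phi> :: "real^'d \<Rightarrow> real"
  assumes C: "0 \<le> C"
    and Q: "\<And>z'. norm (z' - z) < 1 \<Longrightarrow> \<phi> z' - \<phi> z \<le> p \<bullet> (z' - z) + C * (norm (z' - z))^2"
  shows "p \<in> hadamard_superdiff \<phi> z"
  unfolding hadamard_superdiff_def
proof (intro CollectI allI impI)
  fix w :: "real^'d" and \<epsilon> :: real assume \<epsilon>: "0 < \<epsilon>"
  define D where "D = norm p + C * (norm w + 1)^2 + 1"
  have D: "D \<ge> 1" unfolding D_def using C by simp
  define r where "r = min (1 / (norm w + 1)) (\<epsilon> / D)"
  have nw1: "norm w + 1 > 0" using norm_ge_zero[of w] by linarith
  have r0: "r > 0" unfolding r_def using \<epsilon> D nw1 by simp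
  have r1: "r * (norm w + 1) \<le> 1"
  proof -
    have "r \<le> 1 / (norm w + 1)" unfolding r_def by simp
    then show ?thesis using nw1 by (simp add: le_divide_eq)
  qed
  have r2: "r * D \<le> \<epsilon>"
  proof -
    have "r \<le> \<epsilon> / D" unfolding r_def by simp
    then show ?thesis using D by (simp add: le_divide_eq)
  qed
  have r3: "r \<le> 1"
  proof -
    have "r * 1 \<le> r * (norm w + 1)" using r0 by (intro mult_left_mono) auto
    then show ?thesis using r1 by simp
  qed
  show "\<exists>r>0. \<forall>h w'. 0 < h \<and> h < r \<and> norm (w' - w) < r \<longrightarrow>
        (\<phi> (z + h *\<^sub>R w') - \<phi> z) / h \<le> p \<bullet> w + \<epsilon>"
  proof (intro exI[of _ r] conjI allI impI r0)
    fix h and w' :: "real^'d" assume hw: "0 < h \<and> h < r \<and> norm (w' - w) < r"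
    have nw': "norm w' \<le> norm w + 1" using hw r3 norm_triangle_ineq2[of w' w] by linarith
    have "h * norm w' \<le> h * (norm w + 1)"
      using hw nw' by (intro mult_left_mono) auto
    also have "\<dots> < r * (norm w + 1)" using hw nw1 by simp
    finally have "norm ((z + h *\<^sub>R w') - z) < 1"
      using hw r1 by simp
    from Q[OF this] have "\<phi> (z + h *\<^sub>R w') - \<phi> z \<le> p \<bullet> (h *\<^sub>R w') + C * (norm (h *\<^sub>R w'))^2"
      by simp
    also have "\<dots> = h * (p \<bullet> w' + C * h * (norm w')^2)"
      using hw by (simp add: power2_eq_square algebra_simps)
    finally have q: "(\<phi> (z + h *\<^sub>R w') - \<phi> z) / h \<le> p \<bullet> w' + C * h * (norm w')^2"
      using hw by (simp add: divide_le_eq mult.commute)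
    have a: "p \<bullet> w' \<le> p \<bullet> w + norm p * r"
    proof -
      have "p \<bullet> (w' - w) \<le> norm p * norm (w' - w)" by (rule norm_cauchy_schwarz)
      also have "\<dots> \<le> norm p * r" using hw by (intro mult_left_mono) auto
      finally show ?thesis by (simp add: inner_diff_right)
    qed
    have b: "C * h * (norm w')^2 \<le> C * r * (norm w + 1)^2"
      using hw C nw' by (intro mult_mono power_mono) auto
    have "p \<bullet> w' + C * h * (norm w')^2 \<le> p \<bullet> w + r * D"
      using a b r0 unfolding D_def by (simp add: algebra_simps)
    then show "(\<phi> (z + h *\<^sub>R w') - \<phi> z) / h \<le> p \<bullet> w + \<epsilon>" using q r2 by linarith
  qed
qed



lemma lip_cont:
  fixes \<phi> :: "real^'d \<Rightarrow> real"
  assumes K: "0 \<le> K" and lip: "\<And>a b. \<bar>\<phi> a - \<phi> b\<bar> \<le> K * norm (a - b)"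
  shows "continuous_on UNIV \<phi>"
proof (rule lipschitz_on_continuous_on)
  show "lipschitz_on K UNIV \<phi>"
    by (rule lipschitz_onI) (auto simp: dist_real_def dist_norm lip K)
qed

lemma domination:
  fixes \<phi> :: "real^'d \<Rightarrow> real" and L :: "real^'d \<Rightarrow> real^'d \<Rightarrow> real"
  assumes K: "0 \<le> K" and lip: "\<And>a b. \<bar>\<phi> a - \<phi> b\<bar> \<le> K * norm (a - b)"
    and sub: "\<And>z p. p \<in> hadamard_superdiff \<phi> z \<Longrightarrow> - (p \<bullet> v) - L z v \<le> Hbar"
    and h: "0 < h" and r: "0 < r"
    and M: "\<And>t z. 0 \<le> t \<Longrightarrow> t \<le> h \<Longrightarrow> norm (z - (y + t *\<^sub>R v)) \<le> r \<Longrightarrow> L z v \<le> M"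
  shows "\<phi> y - \<phi> (y + h *\<^sub>R v) \<le> h * (Hbar + M)"
proof (rule ccontr)
  assume neg: "\<not> ?thesis"
  define \<kappa> where "\<kappa> = (\<phi> y - \<phi> (y + h *\<^sub>R v) - h * (Hbar + M)) / (2 * h)"
  have \<kappa>: "\<kappa> > 0" using h neg unfolding \<kappa>_def by simp
  define A where "A = Hbar + M + \<kappa>"
  have gap: "\<phi> y - \<phi> (y + h *\<^sub>R v) = h * A + h * \<kappa>"
    unfolding A_def \<kappa>_def using h by (simp add: field_simps)
  define \<epsilon> where "\<epsilon> = min (r / (2*K+1)) (h*\<kappa> / (2*K^2+1))"
  have hk: "h * \<kappa> > 0" using h \<kappa> by simp
  have \<epsilon>0: "\<epsilon> > 0" unfolding \<epsilon>_def using r K hk by (simp add: add_nonneg_pos)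
  have \<epsilon>1: "2*K*\<epsilon> \<le> r"
  proof -
    have "\<epsilon> \<le> r / (2*K+1)" unfolding \<epsilon>_def by simp
    then have "(2*K+1) * \<epsilon> \<le> r" using K by (simp add: le_divide_eq mult.commute)
    then show ?thesis using \<epsilon>0 by (simp add: algebra_simps)
  qed
  have \<epsilon>2: "2*K^2*\<epsilon> < h*\<kappa>"
  proof -
    have "\<epsilon> \<le> h*\<kappa> / (2*K^2+1)" unfolding \<epsilon>_def by simp
    then have "(2*K^2+1) * \<epsilon> \<le> h*\<kappa>" by (simp add: le_divide_eq mult.commute add_nonneg_pos)
    then show ?thesis using \<epsilon>0 by (simp add: algebra_simps)
  qed
  have Ke: "0 \<le> 2*K*\<epsilon>" using K \<epsilon>0 by simp
  have cont\<phi>: "continuous_on UNIV \<phi>" by (rule lip_cont[OF K lip])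
  define R where "R = 2*K*\<epsilon> + h * norm v + 1"
  have R0: "R > 0" unfolding R_def using K \<epsilon>0 h by (simp add: add_nonneg_pos)
  define S where "S = {0..h} \<times> cball y R"
  define Th where "Th = (\<lambda>q::real \<times> (real^'d). \<phi> (snd q) + A * fst q - (norm (snd q - (y + fst q *\<^sub>R v)))^2 / (2*\<epsilon>))"
  have "continuous_on S Th"
    unfolding Th_def using \<epsilon>0 by (intro continuous_intros continuous_on_compose2[OF cont\<phi>]) auto
  moreover have "compact S" unfolding S_def by (intro compact_Times) auto
  moreover have "S \<noteq> {}" unfolding S_def using h R0 by auto
  ultimately obtain q where q: "q \<in> S" "\<forall>q'\<in>S. Th q' \<le> Th q"
    using continuous_attains_sup by blast
  obtain t z where tz: "q = (t, z)" by (cases q)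
  have t: "0 \<le> t" "t \<le> h" and zR: "norm (z - y) \<le> R"
    using q(1) unfolding S_def tz by (auto simp: dist_norm norm_minus_commute)
  define u where "u = z - (y + t *\<^sub>R v)"
  have Thq: "Th q = \<phi> z + A * t - (norm u)^2/(2*\<epsilon>)" unfolding Th_def tz u_def by simp
  have tv: "norm (t *\<^sub>R v) \<le> h * norm v" using t by (simp add: mult_right_mono)
  have "(t, y + t *\<^sub>R v) \<in> S" unfolding S_def R_def using t tv Ke
    by (auto simp: dist_norm)
  then have "Th (t, y + t *\<^sub>R v) \<le> Th q" using q by blast
  then have "(norm u)^2/(2*\<epsilon>) \<le> \<phi> z - \<phi> (y + t *\<^sub>R v)" unfolding Thq unfolding Th_def by simp
  also have "\<dots> \<le> K * norm u" unfolding u_def using lip[of z "y + t *\<^sub>R v"] by simp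
  finally have "(norm u)^2 \<le> (2*K*\<epsilon>) * norm u" using \<epsilon>0 by (simp add: divide_le_eq algebra_simps)
  then have u1: "norm u \<le> 2*K*\<epsilon>"
    by (cases "norm u = 0") (use K \<epsilon>0 in \<open>auto simp: power2_eq_square intro: mult_right_le_imp_le\<close>)
  have zy: "norm (z - y) \<le> 2*K*\<epsilon> + h * norm v"
  proof -
    have "z - y = u + t *\<^sub>R v" unfolding u_def by simp
    then have "norm (z - y) \<le> norm u + norm (t *\<^sub>R v)" by (metis norm_triangle_ineq)
    then show ?thesis using u1 tv by linarith
  qed
  have zin: "(t, z') \<in> S" if "norm (z' - z) < 1" for z'
  proof -
    have "norm (z' - y) \<le> norm (z' - z) + norm (z - y)" using norm_triangle_ineq[of "z' - z" "z - y"] by simp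
    then show ?thesis unfolding S_def R_def using that zy t by (auto simp: dist_norm norm_minus_commute)
  qed
  define p where "p = (1/\<epsilon>) *\<^sub>R u"
  have pS: "p \<in> hadamard_superdiff \<phi> z"
  proof (rule superdiff_quad[where C = "1/(2*\<epsilon>)"])
    show "0 \<le> 1/(2*\<epsilon>)" using \<epsilon>0 by simp
    fix z' assume "norm (z' - z) < 1"
    then have "Th (t, z') \<le> Th q" using zin q by blast
    moreover have "z' - (y + t *\<^sub>R v) = u + (z' - z)" by (simp add: u_def algebra_simps)
    ultimately have i1: "\<phi> z' - (norm (u + (z' - z)))^2/(2*\<epsilon>) \<le> \<phi> z - (norm u)^2/(2*\<epsilon>)"
      unfolding Thq unfolding Th_def by simp
    have X: "(norm (u + (z' - z)))^2 = (norm u)^2 + 2*(u \<bullet> (z' - z)) + (norm (z' - z))^2"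
      using dot_norm[of u "z' - z"] by simp
    have "\<phi> z' - \<phi> z \<le> (norm (u + (z' - z)))^2/(2*\<epsilon>) - (norm u)^2/(2*\<epsilon>)"
      using i1 by linarith
    also have "\<dots> = ((norm (u + (z' - z)))^2 - (norm u)^2)/(2*\<epsilon>)"
      by (simp add: diff_divide_distrib)
    also have "\<dots> = (2*(u \<bullet> (z' - z)) + (norm (z' - z))^2)/(2*\<epsilon>)"
      using X by simp
    also have "\<dots> = (u \<bullet> (z' - z)) / \<epsilon> + 1/(2*\<epsilon>) * (norm (z' - z))^2"
      using \<epsilon>0 by (simp add: field_simps)
    also have "(u \<bullet> (z' - z)) / \<epsilon> = p \<bullet> (z' - z)"
      unfolding p_def by simp
    finally show "\<phi> z' - \<phi> z \<le> p \<bullet> (z' - z) + 1/(2*\<epsilon>) * (norm (z' - z))^2" .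
  qed
  have subp: "- (p \<bullet> v) - L z v \<le> Hbar" using sub[OF pS] .
  have th: "t < h"
  proof (rule ccontr)
    assume "\<not> t < h" then have th: "t = h" using t by simp
    have "(0, y) \<in> S" unfolding S_def using h R0 by auto
    then have "Th (0, y) \<le> Th q" using q by blast
    then have "\<phi> y \<le> \<phi> z + A * h - (norm u)^2/(2*\<epsilon>)" unfolding Thq th unfolding Th_def by simp
    moreover have "(norm u)^2/(2*\<epsilon>) \<ge> 0" using \<epsilon>0 by simp
    moreover have "\<phi> z - \<phi> (y + h *\<^sub>R v) \<le> K * norm u" unfolding u_def th using lip[of z "y + h *\<^sub>R v"] by simp
    moreover have "K * norm u \<le> K * (2*K*\<epsilon>)" using u1 K by (rule mult_left_mono)
    moreover have "K * (2*K*\<epsilon>) = 2*K^2*\<epsilon>" by (simp add: power2_eq_square)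
    moreover have "A * h = h * A" by simp
    ultimately show False using gap \<epsilon>2 by linarith
  qed
  have Apv: "A + p \<bullet> v \<le> 0"
  proof (rule field_le_epsilon)
    fix e :: real assume e: "0 < e"
    define s where "s = min (h - t) (2*\<epsilon>*e/((norm v)^2 + 1))"
    have nv1: "(norm v)^2 + 1 > 0" by (simp add: add_nonneg_pos)
    have s0: "s > 0" unfolding s_def using th e \<epsilon>0 nv1 by simp
    have "(t + s, z) \<in> S" using q(1) t s0 unfolding S_def tz s_def by auto
    then have "Th (t + s, z) \<le> Th q" using q by blast
    moreover have "z - (y + (t + s) *\<^sub>R v) = u + (- s *\<^sub>R v)" by (simp add: u_def algebra_simps)
    ultimately have i2: "\<phi> z + A * (t + s) - (norm (u + (- s *\<^sub>R v)))^2/(2*\<epsilon>) \<le> \<phi> z + A * t - (norm u)^2/(2*\<epsilon>)"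
      unfolding Thq unfolding Th_def by simp
    have Y: "(norm (u + (- s *\<^sub>R v)))^2 = (norm u)^2 - 2 * s * (u \<bullet> v) + s^2 * (norm v)^2"
      using dot_norm[of u "- s *\<^sub>R v"] by (simp add: power_mult_distrib)
    have "A * s \<le> (norm (u + (- s *\<^sub>R v)))^2/(2*\<epsilon>) - (norm u)^2/(2*\<epsilon>)"
      using i2 by (simp add: algebra_simps)
    also have "\<dots> = ((norm (u + (- s *\<^sub>R v)))^2 - (norm u)^2)/(2*\<epsilon>)"
      by (simp add: diff_divide_distrib)
    also have "\<dots> = (s^2 * (norm v)^2 - 2 * s * (u \<bullet> v))/(2*\<epsilon>)"
      using Y by simp
    also have "\<dots> = s * (s * (norm v)^2/(2*\<epsilon>)) - s * ((u \<bullet> v) / \<epsilon>)"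
      using \<epsilon>0 by (simp add: diff_divide_distrib power2_eq_square)
    also have "(u \<bullet> v) / \<epsilon> = p \<bullet> v"
      unfolding p_def by simp
    finally have "s * (A + p \<bullet> v) \<le> s * (s * (norm v)^2/(2*\<epsilon>))"
      by (simp add: algebra_simps)
    then have k: "A + p \<bullet> v \<le> s * (norm v)^2/(2*\<epsilon>)"
      by (rule mult_left_le_imp_le[OF _ s0])
    have "s \<le> 2*\<epsilon>*e/((norm v)^2 + 1)" unfolding s_def by simp
    then have "s * ((norm v)^2 + 1) \<le> 2*\<epsilon>*e" using nv1 by (simp add: le_divide_eq)
    then have "s * (norm v)^2 \<le> 2*\<epsilon>*e" using s0 by (simp add: algebra_simps)
    then have "s * (norm v)^2/(2*\<epsilon>) \<le> e" using \<epsilon>0 by (simp add: divide_le_eq mult.commute)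
    then show "A + p \<bullet> v \<le> 0 + e" using k by linarith
  qed
  have "norm (z - (y + t *\<^sub>R v)) \<le> r" using u1 \<epsilon>1 unfolding u_def by linarith
  then have "L z v \<le> M" using M[OF t] by blast
  then show False using Apv subp \<kappa> unfolding A_def by linarith
qed



lemma out_box:
  assumes "(w::real^'d) \<notin> cbox (- (\<chi> i. r)) (\<chi> i. r)"
  shows "r < norm w"
proof -
  from assms obtain i where "\<not> (- r \<le> w $ i \<and> w $ i \<le> r)"
    unfolding mem_box_cart by auto
  then have "r < \<bar>w $ i\<bar>" by auto
  also have "\<dots> \<le> norm w" by (rule component_le_norm_cart)
  finally show ?thesis .
qed

lemma kernel_integral:
  fixes \<eta> :: "real^'d \<Rightarrow> real"
  assumes supp: "\<forall>w. norm w > 1 \<longrightarrow> \<eta> w = 0" and int: "(\<eta> has_integral 1) UNIV" and \<delta>: "0 < \<delta>"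
  shows "((\<lambda>w. inverse (\<delta> ^ CARD('d)) * \<eta> (inverse \<delta> *\<^sub>R w)) has_integral 1) UNIV"
proof -
  let ?B = "cbox (- (\<chi> i. 1)) (\<chi> i. (1::real)) :: (real^'d) set"
  have eq: "(\<lambda>x. if x \<in> ?B then \<eta> x else 0) = \<eta>"
    using supp out_box[where r=1] by (auto simp: fun_eq_iff)
  have B: "(\<eta> has_integral 1) ?B"
  proof -
    have "((\<lambda>x. if x \<in> ?B then \<eta> x else 0) has_integral 1) UNIV" unfolding eq by (rule int)
    then show ?thesis by (rule has_integral_restrict_UNIV[THEN iffD1])
  qed
  have aff: "((\<lambda>x. \<eta> (inverse \<delta> *\<^sub>R x + 0)) has_integral (1 /\<^sub>R (inverse \<delta>) ^ DIM(real^'d)))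
      (cbox ((- (\<chi> i. 1) - 0) /\<^sub>R inverse \<delta>) (((\<chi> i. 1) - 0) /\<^sub>R inverse \<delta>))"
    by (rule has_integral_affinity'[OF B]) (use \<delta> in simp)
  have aff2: "((\<lambda>x. \<eta> (inverse \<delta> *\<^sub>R x)) has_integral \<delta> ^ CARD('d)) UNIV"
  proof (rule has_integral_on_superset[OF _ _ subset_UNIV])
    show "((\<lambda>x. \<eta> (inverse \<delta> *\<^sub>R x)) has_integral \<delta> ^ CARD('d))
      (cbox ((- (\<chi> i. 1) - 0) /\<^sub>R inverse \<delta>) (((\<chi> i. 1) - 0) /\<^sub>R inverse \<delta>))"
      using aff by (simp add: power_inverse)
  next
    fix x :: "real^'d"
    assume x: "x \<notin> cbox ((- (\<chi> i. 1) - 0) /\<^sub>R inverse \<delta>) (((\<chi> i. 1) - 0) /\<^sub>R inverse \<delta>)"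
    show "\<eta> (inverse \<delta> *\<^sub>R x) = 0"
    proof (rule ccontr)
      assume "\<eta> (inverse \<delta> *\<^sub>R x) \<noteq> 0"
      then have "norm (inverse \<delta> *\<^sub>R x) \<le> 1" using supp by force
      then have nx: "norm x \<le> \<delta>" using \<delta> by (simp add: field_simps)
      have "x \<in> cbox ((- (\<chi> i. 1) - 0) /\<^sub>R inverse \<delta>) (((\<chi> i. 1) - 0) /\<^sub>R inverse \<delta>)"
        unfolding mem_box_cart
      proof
        fix i
        have "\<bar>x $ i\<bar> \<le> \<delta>" using nx component_le_norm_cart[of x i] by linarith
        then show "((- (\<chi> i. 1) - 0) /\<^sub>R inverse \<delta>) $ i \<le> x $ i \<and> x $ i \<le> (((\<chi> i. 1) - 0) /\<^sub>R inverse \<delta>) $ i"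
          by auto
      qed
      then show False using x by blast
    qed
  qed
  have "((\<lambda>w. inverse (\<delta> ^ CARD('d)) * \<eta> (inverse \<delta> *\<^sub>R w)) has_integral inverse (\<delta> ^ CARD('d)) * \<delta> ^ CARD('d)) UNIV"
    by (rule has_integral_mult_right[OF aff2])
  then show ?thesis using \<delta> by simp
qed

lemma moll_integrable:
  fixes \<eta> \<phi> :: "real^'d \<Rightarrow> real"
  assumes cont\<phi>: "continuous_on UNIV \<phi>" and cont\<eta>: "continuous_on UNIV \<eta>"
    and supp: "\<forall>w. norm w > 1 \<longrightarrow> \<eta> w = 0" and \<delta>: "0 < \<delta>"
  shows "(\<lambda>w. \<phi> (x - w) * (inverse (\<delta> ^ CARD('d)) * \<eta> (inverse \<delta> *\<^sub>R w))) integrable_on UNIV"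
proof (rule integrable_on_superset[OF _ _ subset_UNIV])
  show "(\<lambda>w. \<phi> (x - w) * (inverse (\<delta> ^ CARD('d)) * \<eta> (inverse \<delta> *\<^sub>R w))) integrable_on cbox (- (\<chi> i. \<delta>)) (\<chi> i. \<delta>)"
  proof (rule integrable_continuous[OF continuous_on_subset[OF _ subset_UNIV]])
    have c1: "continuous_on UNIV (\<lambda>w. \<phi> (x - w))"
      by (rule continuous_on_compose2[OF cont\<phi> continuous_on_diff[OF continuous_on_const continuous_on_id]]) simp
    have c2: "continuous_on UNIV (\<lambda>w. \<eta> (inverse \<delta> *\<^sub>R w))"
      by (rule continuous_on_compose2[OF cont\<eta> continuous_on_scaleR[OF continuous_on_const continuous_on_id]]) simp
    show "continuous_on UNIV (\<lambda>w. \<phi> (x - w) * (inverse (\<delta> ^ CARD('d)) * \<eta> (inverse \<delta> *\<^sub>R w)))"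
      by (rule continuous_on_mult[OF c1 continuous_on_mult[OF continuous_on_const c2]])
  qed
next
  fix w :: "real^'d" assume "w \<notin> cbox (- (\<chi> i. \<delta>)) (\<chi> i. \<delta>)"
  then have "\<delta> < norm w" by (rule out_box)
  then have "norm (inverse \<delta> *\<^sub>R w) > 1" using \<delta> by (simp add: field_simps)
  then show "\<phi> (x - w) * (inverse (\<delta> ^ CARD('d)) * \<eta> (inverse \<delta> *\<^sub>R w)) = 0" using supp by simp
qed

lemma moll_compare:
  fixes \<eta> \<phi> :: "real^'d \<Rightarrow> real"
  assumes cont\<phi>: "continuous_on UNIV \<phi>" and cont\<eta>: "continuous_on UNIV \<eta>"
    and supp: "\<forall>w. norm w > 1 \<longrightarrow> \<eta> w = 0" and nonneg: "\<forall>w. 0 \<le> \<eta> w"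
    and int: "(\<eta> has_integral 1) UNIV" and \<delta>: "0 < \<delta>"
    and C: "\<And>w. norm w \<le> \<delta> \<Longrightarrow> \<phi> (a - w) - \<phi> (b - w) \<le> C"
  shows "mollify \<eta> \<delta> \<phi> a - mollify \<eta> \<delta> \<phi> b \<le> C"
proof -
  define k where "k = (\<lambda>w::real^'d. inverse (\<delta> ^ CARD('d)) * \<eta> (inverse \<delta> *\<^sub>R w))"
  have kint: "(k has_integral 1) UNIV" unfolding k_def by (rule kernel_integral[OF supp int \<delta>])
  have k0: "0 \<le> k w" for w unfolding k_def using nonneg \<delta> by simp
  have kz: "k w = 0" if "\<not> norm w \<le> \<delta>" for w
  proof -
    have "norm (inverse \<delta> *\<^sub>R w) > 1" using that \<delta> by (simp add: field_simps)
    then show ?thesis unfolding k_def using supp by simp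
  qed
  have mk: "mollify \<eta> \<delta> \<phi> x = integral UNIV (\<lambda>w. \<phi> (x - w) * k w)" for x
    unfolding mollify_def k_def by simp
  have ia: "(\<lambda>w. \<phi> (a - w) * k w) integrable_on UNIV"
    unfolding k_def by (rule moll_integrable[OF cont\<phi> cont\<eta> supp \<delta>])
  have ib: "(\<lambda>w. \<phi> (b - w) * k w) integrable_on UNIV"
    unfolding k_def by (rule moll_integrable[OF cont\<phi> cont\<eta> supp \<delta>])
  have "mollify \<eta> \<delta> \<phi> a - mollify \<eta> \<delta> \<phi> b = integral UNIV (\<lambda>w. \<phi> (a - w) * k w - \<phi> (b - w) * k w)"
    unfolding mk by (rule integral_diff[OF ia ib, symmetric])
  also have "\<dots> \<le> integral UNIV (\<lambda>w. C * k w)"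
  proof (rule integral_le)
    show "(\<lambda>w. \<phi> (a - w) * k w - \<phi> (b - w) * k w) integrable_on UNIV" by (rule integrable_diff[OF ia ib])
    show "(\<lambda>w. C * k w) integrable_on UNIV" using has_integral_mult_right[OF kint] by (rule has_integral_integrable)
    fix w :: "real^'d"
    show "\<phi> (a - w) * k w - \<phi> (b - w) * k w \<le> C * k w"
    proof (cases "norm w \<le> \<delta>")
      case True
      have "(\<phi> (a - w) - \<phi> (b - w)) * k w \<le> C * k w" using C[OF True] k0 by (rule mult_right_mono)
      then show ?thesis by (simp add: left_diff_distrib)
    next
      case False then show ?thesis using kz by simp
    qed
  qed
  also have "\<dots> = C" using integral_unique[OF has_integral_mult_right[OF kint, of C]] by simp
  finally show ?thesis .
qed



lemma sub_bound:
  fixes L :: "real^'d \<Rightarrow> real^'d \<Rightarrow> real" and \<phi> :: "real^'d \<Rightarrow> real"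
  assumes L_cont: "continuous_on UNIV (\<lambda>(x, v). L x v)"
    and L_per: "\<forall>v. periodic_fun (\<lambda>x. L x v)"
    and L_superlin: "filterlim (\<lambda>v. (INF x. L x v) / norm v) at_top at_infinity"
  shows "bdd_above (range (\<lambda>v. q \<bullet> v - L z v))"
proof -
  have "eventually (\<lambda>v. norm q + 1 \<le> (INF x. L x v) / norm v) at_infinity"
    using L_superlin unfolding filterlim_at_top by blast
  then obtain b where b: "\<And>v. b \<le> norm v \<Longrightarrow> norm q + 1 \<le> (INF x. L x v) / norm v"
    unfolding eventually_at_infinity by blast
  define b' where "b' = max b 1"
  obtain B where B: "\<And>x v. norm v \<le> b' \<Longrightarrow> \<bar>L x v\<bar> \<le> B"
    using L_bounded[OF L_cont L_per, of b'] by blast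
  show ?thesis
  proof (rule bdd_aboveI2)
    fix v :: "real^'d"
    show "q \<bullet> v - L z v \<le> max 0 (norm q * b' + B)"
    proof (cases "norm v \<le> b'")
      case True
      have "q \<bullet> v \<le> norm q * norm v" by (rule norm_cauchy_schwarz)
      also have "\<dots> \<le> norm q * b'" using True by (simp add: mult_left_mono)
      finally show ?thesis using B[OF True, of z] by linarith
    next
      case False
      then have nv: "norm v > 0" "b \<le> norm v" unfolding b'_def by auto
      obtain B2 where B2: "\<And>x w. norm w \<le> norm v \<Longrightarrow> \<bar>L x w\<bar> \<le> B2"
        using L_bounded[OF L_cont L_per, of "norm v"] by blast
      have bb: "bdd_below (range (\<lambda>x. L x v))"
      proof (rule bdd_belowI2[of _ "- B2"])
        fix x show "- B2 \<le> L x v" using B2[of v x] by linarith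
      qed
      have "(norm q + 1) * norm v \<le> (INF x. L x v)"
        using b[OF nv(2)] nv(1) by (simp add: le_divide_eq)
      also have "\<dots> \<le> L z v" by (rule cINF_lower[OF bb]) simp
      finally have "(norm q + 1) * norm v \<le> L z v" .
      moreover have "q \<bullet> v \<le> norm q * norm v" by (rule norm_cauchy_schwarz)
      moreover have "(norm q + 1) * norm v = norm q * norm v + norm v" by (simp add: algebra_simps)
      moreover have "0 \<le> max 0 (norm q * b' + B)" by simp
      ultimately show ?thesis using nv(1) by linarith
    qed
  qed
qed



theorem lemma1:
  fixes L :: "real^'d \<Rightarrow> real^'d \<Rightarrow> real"
    and \<phi> \<eta> :: "real^'d \<Rightarrow> real"
    and Hbar K c \<delta> :: real
  assumes L_cont: "continuous_on UNIV (\<lambda>(x, v). L x v)"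
    and L_per: "\<forall>v. periodic_fun (\<lambda>x. L x v)"
    and L_superlin: "filterlim (\<lambda>v. (INF x. L x v) / norm v) at_top at_infinity"
    and sub: "subsolution L \<phi> Hbar"
    and \<phi>_per: "periodic_fun \<phi>"
    and \<phi>_lip: "\<forall>x y. \<bar>\<phi> x - \<phi> y\<bar> \<le> K * torus_dist x y"
    and \<eta>_smooth: "smooth_fun \<eta>"
    and \<eta>_nonneg: "\<forall>w. 0 \<le> \<eta> w"
    and \<eta>_supp: "\<forall>w. norm w > 1 \<longrightarrow> \<eta> w = 0"
    and \<eta>_int: "(\<eta> has_integral 1) UNIV"
    and c_nonneg: "0 \<le> c"
    and c_prop: "\<forall>x v. norm v \<ge> c \<longrightarrow>
                   L x v \<ge> (K + (SUP y. \<bar>L y 0\<bar>) + 1) * norm v"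
    and \<delta>_pos: "0 < \<delta>"
  shows "subsolution L (mollify \<eta> \<delta> \<phi>) (Hbar + omega L (max c 1) \<delta>)"
proof -
  obtain i :: 'd where True by simp
  have tdh: "torus_dist 0 (axis i (1/2)) \<ge> 1/2" by (rule td_half)
  have "\<bar>\<phi> 0 - \<phi> (axis i (1/2))\<bar> \<le> K * torus_dist 0 (axis i (1/2))" using \<phi>_lip by blast
  then have "0 \<le> K * torus_dist 0 (axis i (1/2))" by (meson abs_ge_zero order_trans)
  then have K0: "0 \<le> K" using tdh by (auto simp: zero_le_mult_iff)
  have lip: "\<bar>\<phi> a - \<phi> b\<bar> \<le> K * norm (a - b)" for a b
  proof -
    have "\<bar>\<phi> a - \<phi> b\<bar> \<le> K * torus_dist a b" using \<phi>_lip by blast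
    also have "\<dots> \<le> K * norm (b - a)" using td_le[of a b] K0 by (rule mult_left_mono)
    finally show ?thesis by (simp add: norm_minus_commute)
  qed
  have cont\<phi>: "continuous_on UNIV \<phi>" by (rule lip_cont[OF K0 lip])
  have cont\<eta>: "continuous_on UNIV \<eta>"
  proof -
    from \<eta>_smooth have "\<forall>x. \<eta> differentiable (at x)" by (cases rule: smooth_fun.cases) auto
    then show ?thesis by (simp add: continuous_at_imp_continuous_on differentiable_imp_continuous_within)
  qed
  define f where "f = mollify \<eta> \<delta> \<phi>"
  have cmp: "f a - f b \<le> C" if "\<And>w. norm w \<le> \<delta> \<Longrightarrow> \<phi> (a - w) - \<phi> (b - w) \<le> C" for a b C
    unfolding f_def by (rule moll_compare[OF cont\<phi> cont\<eta> \<eta>_supp \<eta>_nonneg \<eta>_int \<delta>_pos that])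
  have flip1: "f a - f b \<le> K * norm (a - b)" for a b
  proof (rule cmp)
    fix w :: "real^'d"
    have "(a - w) - (b - w) = a - b" by simp
    then show "\<phi> (a - w) - \<phi> (b - w) \<le> K * norm (a - b)" using lip[of "a - w" "b - w"] by simp
  qed
  have flip: "\<bar>f a - f b\<bar> \<le> K * norm (a - b)" for a b
    using flip1[of a b] flip1[of b a] by (simp add: norm_minus_commute abs_le_iff)
  have fcont: "continuous_on UNIV f" by (rule lip_cont[OF K0 flip])
  have usc: "upper_semicont f" unfolding upper_semicont_def
    by (intro allI open_Collect_less[OF fcont continuous_on_const])
  define C3 where "C3 = max c 1"
  define W where "W = omega L C3 \<delta>"
  obtain B3 where B3: "\<And>x v. norm v \<le> C3 \<Longrightarrow> \<bar>L x v\<bar> \<le> B3"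
    using L_bounded[OF L_cont L_per, of C3] by blast
  have Wbdd: "bdd_above {\<bar>L x v - L y v\<bar> | x y v. torus_dist x y \<le> \<delta> \<and> norm v \<le> C3}"
  proof (rule bdd_aboveI[of _ "2 * B3"])
    fix a assume "a \<in> {\<bar>L x v - L y v\<bar> | x y v. torus_dist x y \<le> \<delta> \<and> norm v \<le> C3}"
    then obtain x y v where a: "a = \<bar>L x v - L y v\<bar>" "norm v \<le> C3" by blast
    show "a \<le> 2 * B3" using a B3[OF a(2), of x] B3[OF a(2), of y] by linarith
  qed
  have Wge: "\<bar>L x v - L y v\<bar> \<le> W" if "torus_dist x y \<le> \<delta>" "norm v \<le> C3" for x y v
    unfolding W_def omega_def by (rule cSup_upper[OF _ Wbdd]) (use that in blast)
  have subv: "- (p \<bullet> v) - L z v \<le> Hbar" if p: "p \<in> hadamard_superdiff \<phi> z" for z p v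
  proof -
    have "Ham L z (-p) \<le> Hbar" using sub p unfolding subsolution_def by blast
    moreover have "(-p) \<bullet> v - L z v \<le> Ham L z (-p)" unfolding Ham_def
      by (rule cSUP_upper[OF _ sub_bound[OF L_cont L_per L_superlin]]) simp
    ultimately show ?thesis by simp
  qed
  obtain B0 where B0: "\<And>x v. norm v \<le> 0 \<Longrightarrow> \<bar>L x v\<bar> \<le> B0"
    using L_bounded[OF L_cont L_per, of 0] by blast
  have S_bdd: "bdd_above (range (\<lambda>y. \<bar>L y 0\<bar>))"
    by (rule bdd_aboveI2[where M=B0]) (use B0 in simp)
  define S where "S = (SUP y. \<bar>L y 0\<bar>)"
  have S: "\<bar>L y 0\<bar> \<le> S" for y unfolding S_def by (rule cSUP_upper[OF _ S_bdd]) simp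
  show ?thesis
    unfolding subsolution_def f_def[symmetric]
  proof (intro conjI allI ballI usc)
    fix x p assume p: "p \<in> hadamard_superdiff f x"
    have pK: "norm p \<le> K"
    proof -
      have "(norm p)^2 \<le> K * norm p + 0"
      proof (rule field_le_epsilon)
        fix e :: real assume e: "0 < e"
        obtain r where r: "r > 0" "\<forall>h w'. 0 < h \<and> h < r \<and> norm (w' - (-p)) < r \<longrightarrow>
            (f (x + h *\<^sub>R w') - f x) / h \<le> p \<bullet> (-p) + e"
          using p e unfolding hadamard_superdiff_def by blast
        define h where "h = r / 2"
        have h: "0 < h" "h < r" using r by (auto simp: h_def)
        have q: "(f (x + h *\<^sub>R (-p)) - f x) / h \<le> p \<bullet> (-p) + e"
          using r(2)[rule_format, of h "-p"] h r(1) by simp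
        have "\<bar>f x - f (x + h *\<^sub>R (-p))\<bar> \<le> K * norm (x - (x + h *\<^sub>R (-p)))" by (rule flip)
        also have "norm (x - (x + h *\<^sub>R (-p))) = h * norm p" using h by simp
        finally have "f x - f (x + h *\<^sub>R (-p)) \<le> h * (K * norm p)" by (simp add: algebra_simps)
        then have "- (K * norm p) \<le> (f (x + h *\<^sub>R (-p)) - f x) / h" using h by (simp add: field_simps)
        moreover have "p \<bullet> (-p) = - ((norm p)^2)" by (simp add: power2_norm_eq_inner)
        ultimately show "(norm p)^2 \<le> K * norm p + 0 + e" using q by linarith
      qed
      then have "norm p * norm p \<le> K * norm p" by (simp add: power2_eq_square)
      then show ?thesis
        by (cases "norm p = 0") (use K0 in \<open>auto intro: mult_right_le_imp_le\<close>)
    qed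
    have KC: "- (p \<bullet> v) - L x v \<le> Hbar + W" if v: "norm v \<le> C3" for v
    proof (rule field_le_epsilon)
      fix e :: real assume e: "0 < e"
      define e2 where "e2 = e / 2"
      have e2: "0 < e2" using e by (simp add: e2_def)
      have "continuous_on UNIV (\<lambda>a::real^'d. (a, v))"
        by (intro continuous_on_Pair continuous_on_id continuous_on_const)
      then have contLv: "continuous_on UNIV (\<lambda>a. L a v)"
        using continuous_on_compose2[OF L_cont] by fastforce
      have "uniformly_continuous_on (cball x (\<delta>+1)) (\<lambda>a. L a v)"
        by (rule compact_uniformly_continuous[OF continuous_on_subset[OF contLv subset_UNIV] compact_cball])
      then obtain r0 where r0: "r0 > 0" "\<forall>a\<in>cball x (\<delta>+1). \<forall>b\<in>cball x (\<delta>+1). dist b a < r0 \<longrightarrow> dist (L b v) (L a v) < e2"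
        unfolding uniformly_continuous_on_def using e2 by blast
      define \<rho> where "\<rho> = min r0 1 / 3"
      have \<rho>: "0 < \<rho>" "3 * \<rho> \<le> r0" "3 * \<rho> \<le> 1" using r0(1) by (auto simp: \<rho>_def)
      obtain r1 where r1: "r1 > 0" "\<forall>h w'. 0 < h \<and> h < r1 \<and> norm (w' - v) < r1 \<longrightarrow>
          (f (x + h *\<^sub>R w') - f x) / h \<le> p \<bullet> v + e2"
        using p e2 unfolding hadamard_superdiff_def by blast
      have nv1: "norm v + 1 > 0" using norm_ge_zero[of v] by linarith
      define h where "h = min (r1 / 2) (\<rho> / (norm v + 1))"
      have h: "0 < h" "h < r1" using r1(1) \<rho>(1) nv1 by (auto simp: h_def)
      have hv: "h * norm v \<le> \<rho>"
      proof -
        have "h \<le> \<rho> / (norm v + 1)" by (simp add: h_def)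
        then have "h * (norm v + 1) \<le> \<rho>" using nv1 by (simp add: le_divide_eq)
        then show ?thesis using h(1) by (simp add: algebra_simps)
      qed
      have q: "(f (x + h *\<^sub>R v) - f x) / h \<le> p \<bullet> v + e2"
        using r1(2)[rule_format, of h v] h r1(1) by simp
      define M where "M = L x v + W + e2"
      have dom: "\<phi> (x - w) - \<phi> (x - w + h *\<^sub>R v) \<le> h * (Hbar + M)" if w: "norm w \<le> \<delta>" for w
      proof (rule domination[OF K0 lip subv h(1) \<rho>(1)])
        fix t z assume t: "0 \<le> t" "t \<le> h" and z: "norm (z - (x - w + t *\<^sub>R v)) \<le> \<rho>"
        have "t * norm v \<le> h * norm v" using t by (simp add: mult_right_mono)
        then have tv: "norm (t *\<^sub>R v) \<le> \<rho>" using hv t by simp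
        have "z - (x - w) = (z - (x - w + t *\<^sub>R v)) + t *\<^sub>R v" by simp
        then have "norm (z - (x - w)) \<le> norm (z - (x - w + t *\<^sub>R v)) + norm (t *\<^sub>R v)"
          by (metis norm_triangle_ineq)
        then have zw: "norm (z - (x - w)) \<le> 2 * \<rho>" using z tv by linarith
        have xw: "x - w \<in> cball x (\<delta>+1)" using w by (simp add: dist_norm)
        have "x - z = (x - w - z) + w" by simp
        then have "norm (x - z) \<le> norm (x - w - z) + norm w" by (metis norm_triangle_ineq)
        moreover have "norm (x - w - z) = norm (z - (x - w))" by (rule norm_minus_commute)
        ultimately have zin: "z \<in> cball x (\<delta>+1)" using zw w \<rho> by (simp add: dist_norm)
        have "dist z (x - w) < r0" using zw \<rho> by (simp add: dist_norm)
        then have "dist (L z v) (L (x - w) v) < e2" using r0(2) xw zin by blast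
        then have 1: "L z v < L (x - w) v + e2" by (simp add: dist_real_def abs_less_iff)
        have "torus_dist (x - w) x \<le> norm (x - (x - w))" by (rule td_le)
        then have "torus_dist (x - w) x \<le> \<delta>" using w by simp
        then have "\<bar>L (x - w) v - L x v\<bar> \<le> W" using Wge v by blast
        then show "L z v \<le> M" using 1 unfolding M_def abs_le_iff by linarith
      qed
      have "f x - f (x + h *\<^sub>R v) \<le> h * (Hbar + M)"
      proof (rule cmp)
        fix w :: "real^'d" assume wd: "norm w \<le> \<delta>"
        have eq: "x + h *\<^sub>R v - w = x - w + h *\<^sub>R v" by (simp add: algebra_simps)
        show "\<phi> (x - w) - \<phi> (x + h *\<^sub>R v - w) \<le> h * (Hbar + M)" unfolding eq by (rule dom[OF wd])
      qed
      then have "(f x - f (x + h *\<^sub>R v)) / h \<le> Hbar + M" using h(1) by (simp add: divide_le_eq mult.commute)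
      moreover have "(f x - f (x + h *\<^sub>R v)) / h = - ((f (x + h *\<^sub>R v) - f x) / h)" by (metis minus_diff_eq minus_divide_left)
      ultimately have "- (p \<bullet> v) \<le> e2 + Hbar + M" using q by linarith
      then show "- (p \<bullet> v) - L x v \<le> Hbar + W + e" unfolding M_def e2_def by linarith
    qed
    show "Ham L x (- p) \<le> Hbar + omega L (max c 1) \<delta>"
      unfolding Ham_def C3_def[symmetric] W_def[symmetric]
    proof (rule cSUP_least)
      show "UNIV \<noteq> {}" by simp
      fix v :: "real^'d"
      show "(- p) \<bullet> v - L x v \<le> Hbar + W"
      proof (cases "norm v \<le> C3")
        case True then show ?thesis using KC by simp
      next
        case False
        then have v1: "norm v \<ge> 1" "norm v \<ge> c" unfolding C3_def by auto
        have "(- p) \<bullet> v \<le> norm (- p) * norm v" by (rule norm_cauchy_schwarz)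
        also have "\<dots> \<le> K * norm v" using pK by (simp add: mult_right_mono)
        finally have a: "(- p) \<bullet> v \<le> K * norm v" .
        have b: "L x v \<ge> (K + S + 1) * norm v" using c_prop v1(2) unfolding S_def by blast
        have S0: "S \<ge> 0" using S[of x] by linarith
        have c': "(S + 1) * 1 \<le> (S + 1) * norm v" using S0 v1(1) by (intro mult_left_mono) auto
        have d: "- L x 0 \<le> Hbar + W" using KC[of 0] unfolding C3_def by simp
        have "(K + S + 1) * norm v = K * norm v + (S + 1) * norm v" by (simp add: algebra_simps)
        moreover have "L x 0 \<le> \<bar>L x 0\<bar>" by simp
        ultimately have e1: "(- p) \<bullet> v - L x v \<le> - ((S + 1) * norm v)" using a b by linarith
        have e2: "S + 1 \<le> (S + 1) * norm v" using c' by simp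
        have e3: "L x 0 \<le> S" using S[of x] by linarith
        show ?thesis using e1 e2 e3 d by linarith
      qed
    qed
  qed
qed

end
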